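(* Consider the closed-loop system $\dot x=f^{\mathsf c}(x,w)=f(x,N(x),w)$ on $\mathbb{R}^n$ with $f^{\mathsf c}$ continuous and locally Lipschitz in $x$, and disturbance set $[\underline w,\overline w]$. Let $T\in\mathbb{R}^{n\times n}$ be invertible, $\Phi(x)=Tx$, and let $\dot y=g^{\mathsf c}(y,w):=Tf(T^{-1}y,N(T^{-1}y),w)$ be the transformed system. Let $\mathsf G^{\mathsf c}_{\mathcal S}$ be an $\mathcal S$-localized inclusion function for $g^{\mathsf c}$, let $\mathsf E_{T,\mathcal S}$ be the embedding map induced by $\mathsf G^{\mathsf c}_{\mathcal S}$, and let $[\underline y_0,\overline y_0]\subseteq\mathcal S$. If $\mathsf E_{T,\mathcal S}(\underline y_0,\overline y_0,\underline w,\overline w)\ge_{\mathrm{SE}}0$, then the paralleletope $\Phi^{-1}([\underline y_0,\overline y_0])=\{T^{-1}y:y\in[\underline y_0,\overline y_0]\}$ is a $[\underline w,\overline w]$-robustly forward invariant set for $\dot x=f^{\mathsf c}(x,w)$.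
   Context: Notation: $x\le y$ componentwise; $[\underline y,\overline y]=\{y:\underline y\le y\le\overline y\}$; $\mathcal T^{2n}_{\ge0}=\{(x,\hat x):x\le\hat x\}$; $(a,b)\ge_{\mathrm{SE}}0$ means $a\ge0$ and $b\le0$ componentwise. $y_{i:z}$ is $y$ with $i$-th entry replaced by $z_i$. An $\mathcal S$-localized inclusion function $\mathsf G=(\underline{\mathsf G},\overline{\mathsf G})$ for $g^{\mathsf c}$ satisfies $\underline{\mathsf G}(\underline y,\overline y,\underline w,\overline w)\le g^{\mathsf c}(y,w)\le\overline{\mathsf G}(\underline y,\overline y,\underline w,\overline w)$ for all $y\in[\underline y,\overline y]\subseteq\mathcal S$, $w\in[\underline w,\overline w]$. Induced embedding map: $(\underline{\mathsf E}_{T,\mathcal S})_i=(\underline{\mathsf G}(\underline y,\overline y_{i:\underline y},\underline w,\overline w))_i$, $(\overline{\mathsf E}_{T,\mathcal S})_i=(\overline{\mathsf G}(\underline y_{i:\overline y},\overline y,\underline w,\overline w))_i$. A set $\mathcal X$ is $\mathcal W$-robustly forward invariant if every solution starting in $\mathcal X$ under any piecewise continuous disturbance with values in $\mathcal W$ remains in $\mathcal X$ for all $t\ge0$. *)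

theory Defs
  imports "HOL-Analysis.Analysis"
begin

text \<open>Vectors in R^n are \<open>real^'n\<close>; the order \<open>\<le>\<close> on \<open>real^'n\<close> is componentwise,
  so \<open>{a..b}\<close> is the box [a,b].\<close>

definition vec_repl :: "real^'n \<Rightarrow> 'n \<Rightarrow> real^'n \<Rightarrow> real^'n" where
  "vec_repl y i z = (\<chi> j. if j = i then z $ i else y $ j)"

definition localized_inclusion ::
  "(real^'n) set \<Rightarrow> (real^'n \<Rightarrow> real^'m \<Rightarrow> real^'n)
   \<Rightarrow> (real^'n \<Rightarrow> real^'n \<Rightarrow> real^'m \<Rightarrow> real^'m \<Rightarrow> real^'n)
   \<Rightarrow> (real^'n \<Rightarrow> real^'n \<Rightarrow> real^'m \<Rightarrow> real^'m \<Rightarrow> real^'n) \<Rightarrow> bool" where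
  "localized_inclusion S g Gl Gu \<longleftrightarrow>
     (\<forall>yl yu wl wu. {yl..yu} \<subseteq> S \<longrightarrow>
        (\<forall>y \<in> {yl..yu}. \<forall>w \<in> {wl..wu}. Gl yl yu wl wu \<le> g y w \<and> g y w \<le> Gu yl yu wl wu))"

definition embed_lower ::
  "(real^'n \<Rightarrow> real^'n \<Rightarrow> real^'m \<Rightarrow> real^'m \<Rightarrow> real^'n)
   \<Rightarrow> real^'n \<Rightarrow> real^'n \<Rightarrow> real^'m \<Rightarrow> real^'m \<Rightarrow> real^'n" where
  "embed_lower Gl yl yu wl wu = (\<chi> i. Gl yl (vec_repl yu i yl) wl wu $ i)"

definition embed_upper ::
  "(real^'n \<Rightarrow> real^'n \<Rightarrow> real^'m \<Rightarrow> real^'m \<Rightarrow> real^'n)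
   \<Rightarrow> real^'n \<Rightarrow> real^'n \<Rightarrow> real^'m \<Rightarrow> real^'m \<Rightarrow> real^'n" where
  "embed_upper Gu yl yu wl wu = (\<chi> i. Gu (vec_repl yl i yu) yu wl wu $ i)"

definition se_nonneg :: "real^'n \<Rightarrow> real^'n \<Rightarrow> bool" where
  "se_nonneg a b \<longleftrightarrow> 0 \<le> a \<and> b \<le> 0"

definition piecewise_continuous_nonneg :: "(real \<Rightarrow> 'a::real_normed_vector) \<Rightarrow> bool" where
  "piecewise_continuous_nonneg w \<longleftrightarrow>
     (\<forall>b\<ge>0. \<exists>K. finite K \<and> (\<forall>t\<in>{0..b} - K. isCont w t)) \<and>
     (\<forall>t\<ge>0. (\<exists>l. (w \<longlongrightarrow> l) (at_right t)) \<and> (t > 0 \<longrightarrow> (\<exists>l. (w \<longlongrightarrow> l) (at_left t))))"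

text \<open>x is a (Caratheodory) solution of x' = f(x, w(t)) on [0,\<tau>].\<close>
definition is_solution ::
  "(real^'n \<Rightarrow> real^'m \<Rightarrow> real^'n) \<Rightarrow> (real \<Rightarrow> real^'m) \<Rightarrow> real \<Rightarrow> (real \<Rightarrow> real^'n) \<Rightarrow> bool" where
  "is_solution f w \<tau> x \<longleftrightarrow>
     continuous_on {0..\<tau>} x \<and>
     (\<forall>t\<in>{0..\<tau>}. (\<lambda>s. f (x s) (w s)) integrable_on {0..t} \<and>
                    x t = x 0 + integral {0..t} (\<lambda>s. f (x s) (w s)))"

definition robustly_forward_invariant ::
  "(real^'n \<Rightarrow> real^'m \<Rightarrow> real^'n) \<Rightarrow> (real^'m) set \<Rightarrow> (real^'n) set \<Rightarrow> bool" where
  "robustly_forward_invariant f W X \<longleftrightarrow>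
     (\<forall>w x \<tau>. piecewise_continuous_nonneg w \<and> (\<forall>t\<ge>0. w t \<in> W) \<and> \<tau> \<ge> 0 \<and>
        is_solution f w \<tau> x \<and> x 0 \<in> X \<longrightarrow> (\<forall>t\<in>{0..\<tau>}. x t \<in> X))"

end

theory Submission
  imports Defs "HOL-Analysis.Analysis"
begin
definition clampv :: "real^'n \<Rightarrow> real^'n \<Rightarrow> real^'n \<Rightarrow> real^'n" where
  "clampv yl yu y = (\<chi> j. max (yl$j) (min (yu$j) (y$j)))"

lemma clampv_in: "yl \<le> yu \<Longrightarrow> clampv yl yu y \<in> {yl..yu}"
  by (auto simp: clampv_def less_eq_vec_def)

lemma clampv_id: "y \<in> {yl..yu} \<Longrightarrow> clampv yl yu y = y"
  by (auto simp: clampv_def less_eq_vec_def vec_eq_iff)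

lemma clampv_lip: "dist (clampv yl yu a) (clampv yl yu b) \<le> dist a b"
  unfolding dist_norm
  by (rule norm_le_componentwise_cart) (auto simp: clampv_def)

lemma clampv_low: "yl \<le> yu \<Longrightarrow> y$i \<le> yl$i \<Longrightarrow> clampv yl yu y $ i = yl$i"
  by (auto simp: clampv_def less_eq_vec_def)

lemma clampv_up: "yl \<le> yu \<Longrightarrow> yu$i \<le> y$i \<Longrightarrow> clampv yl yu y $ i = yu$i"
  by (auto simp: clampv_def less_eq_vec_def)

lemma clampv_dist_le:
  fixes y :: "real^'n"
  assumes "\<And>i. \<bar>y$i - clampv yl yu y $ i\<bar> \<le> B"
  shows "dist y (clampv yl yu y) \<le> real CARD('n) * B"
proof -
  have "dist y (clampv yl yu y) \<le> (\<Sum>i\<in>UNIV. \<bar>(y - clampv yl yu y)$i\<bar>)"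
    unfolding dist_norm by (rule norm_le_l1_cart)
  also have "\<dots> \<le> (\<Sum>i\<in>(UNIV::'n set). B)"
    using assms by (intro sum_mono) simp
  finally show ?thesis by simp
qed


lemma comp_cont:
  fixes y :: "real \<Rightarrow> real^'n"
  assumes "continuous_on S y" "U \<subseteq> S"
  shows "continuous_on U (\<lambda>s. y s $ i)"
  by (rule continuous_on_component[OF continuous_on_subset[OF assms]])

lemma comp_integral_diff:
  fixes G :: "real \<Rightarrow> real^'n"
  assumes Gint: "\<And>t. t\<in>{0..\<tau>} \<Longrightarrow> G integrable_on {0..t}"
    and yeq: "\<And>t. t\<in>{0..\<tau>} \<Longrightarrow> y t = y 0 + integral {0..t} G"
    and h: "0 \<le> t1" "t1 \<le> t" "t \<le> \<tau>"
  shows "y t $ i - y t1 $ i = integral {t1..t} (\<lambda>s. G s $ i)"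
    and "(\<lambda>s. G s $ i) integrable_on {t1..t}"
proof -
  have gi: "G integrable_on {0..t}" using Gint h by auto
  have gi2: "G integrable_on {t1..t}"
    by (rule integrable_subinterval_real[OF gi]) (use h in auto)
  have "integral {0..t1} G + integral {t1..t} G = integral {0..t} G"
    by (rule Henstock_Kurzweil_Integration.integral_combine) (use h gi in auto)
  moreover have "y t = y 0 + integral {0..t} G" "y t1 = y 0 + integral {0..t1} G"
    using yeq[of t] yeq[of t1] h by auto
  ultimately have "y t - y t1 = integral {t1..t} G" by (simp add: algebra_simps)
  then show "y t $ i - y t1 $ i = integral {t1..t} (\<lambda>s. G s $ i)"
    using integral_component_eq_cart[OF gi2, of i] by (metis vector_minus_component)
  show "(\<lambda>s. G s $ i) integrable_on {t1..t}"
    using integrable_linear[OF gi2 bounded_linear_vec_nth[of i]] by (simp add: o_def)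
qed

lemma lower_piece:
  fixes y G :: "real \<Rightarrow> real^'n"
  assumes ycont: "continuous_on {0..\<tau>} y"
    and Gint: "\<And>t. t\<in>{0..\<tau>} \<Longrightarrow> G integrable_on {0..t}"
    and yeq: "\<And>t. t\<in>{0..\<tau>} \<Longrightarrow> y t = y 0 + integral {0..t} G"
    and t0: "0 \<le> t0" and tt: "t0 \<le> t" "t \<le> \<tau>" "t \<le> t0 + \<delta>"
    and c0: "c \<le> y t0 $ i" and ct: "y t $ i < c"
    and K: "K \<ge> 0"
    and bnd: "\<And>s. s \<in> {t0..t} \<Longrightarrow> y s $ i \<le> c \<Longrightarrow> - K \<le> G s $ i"
  shows "c - y t $ i \<le> K * \<delta>"
proof -
  define A where "A = {s\<in>{t0..t}. c \<le> y s $ i}"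
  have "continuous_on {t0..t} (\<lambda>s. y s $ i)" by (rule comp_cont[OF ycont]) (use t0 tt in auto)
  then have cA: "closed A" unfolding A_def
    by (intro continuous_on_closed_Collect_le continuous_on_const closed_atLeastAtMost)
  have t0A: "t0 \<in> A" using c0 tt by (auto simp: A_def)
  have bA: "bdd_above A" unfolding A_def by (rule bdd_aboveI[of _ t]) auto
  define t1 where "t1 = Sup A"
  have t1A: "t1 \<in> A" unfolding t1_def using closed_contains_Sup[OF _ bA cA] t0A by auto
  have t0t1: "t0 \<le> t1" unfolding t1_def using cSup_upper[OF t0A bA] .
  have t1t: "t1 < t" using t1A ct by (auto simp: A_def less_le)
  have gt: "y s $ i < c" if "s \<in> {t1<..t}" for s
  proof (rule ccontr)
    assume "\<not> y s $ i < c"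
    then have "s \<in> A" using that t0t1 by (auto simp: A_def)
    then have "s \<le> t1" unfolding t1_def using cSup_upper[OF _ bA] by auto
    then show False using that by auto
  qed
  define C where "C = {s\<in>{t1..t}. y s $ i \<le> c}"
  have "continuous_on {t1..t} (\<lambda>s. y s $ i)" by (rule comp_cont[OF ycont]) (use t0 t0t1 tt in auto)
  then have cC: "closed C" unfolding C_def
    by (intro continuous_on_closed_Collect_le continuous_on_const closed_atLeastAtMost)
  have "{t1<..t} \<subseteq> C" using gt by (auto simp: C_def less_imp_le)
  then have "closure {t1<..t} \<subseteq> C" using cC closure_minimal by blast
  then have sub: "{t1..t} \<subseteq> C" using t1t by simp
  have eq: "y t $ i - y t1 $ i = integral {t1..t} (\<lambda>s. G s $ i)"
    and gi: "(\<lambda>s. G s $ i) integrable_on {t1..t}"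
    using comp_integral_diff[OF Gint yeq _ less_imp_le[OF t1t] tt(2)] t0 t0t1 by auto
  have "integral {t1..t} (\<lambda>s. - K) \<le> integral {t1..t} (\<lambda>s. G s $ i)"
    by (rule integral_le) (use gi sub t0t1 in \<open>auto simp: C_def intro!: bnd\<close>)
  then have "- K * (t - t1) \<le> y t $ i - y t1 $ i" using eq t1t by (simp add: mult.commute)
  moreover have "c \<le> y t1 $ i" using t1A by (auto simp: A_def)
  moreover have "K * (t - t1) \<le> K * \<delta>" using K t0t1 tt by (intro mult_left_mono) auto
  ultimately show ?thesis by linarith
qed

lemma upper_piece:
  fixes y G :: "real \<Rightarrow> real^'n"
  assumes ycont: "continuous_on {0..\<tau>} y"
    and Gint: "\<And>t. t\<in>{0..\<tau>} \<Longrightarrow> G integrable_on {0..t}"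
    and yeq: "\<And>t. t\<in>{0..\<tau>} \<Longrightarrow> y t = y 0 + integral {0..t} G"
    and t0: "0 \<le> t0" and tt: "t0 \<le> t" "t \<le> \<tau>" "t \<le> t0 + \<delta>"
    and c0: "y t0 $ i \<le> c" and ct: "c < y t $ i"
    and K: "K \<ge> 0"
    and bnd: "\<And>s. s \<in> {t0..t} \<Longrightarrow> c \<le> y s $ i \<Longrightarrow> G s $ i \<le> K"
  shows "y t $ i - c \<le> K * \<delta>"
proof -
  have "- c - (- y t) $ i \<le> K * \<delta>"
  proof (rule lower_piece[where y="\<lambda>s. - y s" and G="\<lambda>s. - G s" and \<tau>=\<tau>])
    show "continuous_on {0..\<tau>} (\<lambda>s. - y s)" using ycont by (intro continuous_intros)
    show "\<And>t. t \<in> {0..\<tau>} \<Longrightarrow> (\<lambda>s. - G s) integrable_on {0..t}"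
      using Gint by (simp add: integrable_neg)
    show "- y t = - y 0 + integral {0..t} (\<lambda>s. - G s)" if "t \<in> {0..\<tau>}" for t
      using yeq[OF that] Gint[OF that] by (simp add: integral_neg)
    show "\<And>s. s \<in> {t0..t} \<Longrightarrow> (- y s) $ i \<le> - c \<Longrightarrow> - K \<le> (- G s) $ i"
      using bnd by force
  qed (use t0 tt c0 ct K in auto)
  then show ?thesis by simp
qed

lemma local_step:
  fixes y G :: "real \<Rightarrow> real^'n" and yl yu :: "real^'n"
  assumes ycont: "continuous_on {0..\<tau>} y"
    and Gint: "\<And>t. t\<in>{0..\<tau>} \<Longrightarrow> G integrable_on {0..t}"
    and yeq: "\<And>t. t\<in>{0..\<tau>} \<Longrightarrow> y t = y 0 + integral {0..t} G"
    and lu: "yl \<le> yu"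
    and t0: "t0 \<in> {0..\<tau>}" and yt0: "y t0 \<in> {yl..yu}"
    and r: "r > 0" and L: "L \<ge> 0"
    and low: "\<And>s i. s\<in>{0..\<tau>} \<Longrightarrow> dist (y s) (y t0) < r \<Longrightarrow> y s $ i \<le> yl $ i \<Longrightarrow>
                 - (L * dist (y s) (clampv yl yu (y s))) \<le> G s $ i"
    and up: "\<And>s i. s\<in>{0..\<tau>} \<Longrightarrow> dist (y s) (y t0) < r \<Longrightarrow> yu $ i \<le> y s $ i \<Longrightarrow>
                 G s $ i \<le> L * dist (y s) (clampv yl yu (y s))"
  shows "\<exists>\<delta>>0. \<forall>t\<in>{0..\<tau>}. t0 \<le> t \<and> t \<le> t0 + \<delta> \<longrightarrow> y t \<in> {yl..yu}"
proof -
  obtain d1 where d1: "d1 > 0" "\<And>s. s\<in>{0..\<tau>} \<Longrightarrow> dist s t0 < d1 \<Longrightarrow> dist (y s) (y t0) < r"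
    using ycont t0 r unfolding continuous_on_iff by metis
  define n where "n = real CARD('n)"
  have n: "n \<ge> 1" unfolding n_def by (simp add: Suc_leI)
  define \<delta> where "\<delta> = min (d1/2) (1/(4*n*(L+1)))"
  have \<delta>: "\<delta> > 0" "\<delta> < d1" using d1 n L by (auto simp: \<delta>_def)
  have "n*L*\<delta> \<le> n*(L+1)*(1/(4*n*(L+1)))"
    using n L \<delta> by (intro mult_mono) (auto simp: \<delta>_def)
  also have "\<dots> = 1/4"
  proof -
    have "n*(L+1) \<noteq> 0" using n L by simp
    then show ?thesis by simp
  qed
  finally have nL\<delta>: "n*L*\<delta> \<le> 1/4" .
  define I where "I = {s\<in>{0..\<tau>}. t0 \<le> s \<and> s \<le> t0 + \<delta>}"
  define e where "e s = dist (y s) (clampv yl yu (y s))" for s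
  have near: "dist (y s) (y t0) < r" if "s \<in> I" for s
    using d1(2)[of s] that \<delta> by (auto simp: I_def dist_real_def)
  have ebnd: "e s \<le> 2*r" if "s \<in> I" for s
  proof -
    have "e s \<le> dist (y s) (y t0) + dist (y t0) (clampv yl yu (y s))"
      unfolding e_def by (rule dist_triangle)
    also have "dist (y t0) (clampv yl yu (y s)) = dist (clampv yl yu (y t0)) (clampv yl yu (y s))"
      using clampv_id[OF yt0] by simp
    also have "\<dots> \<le> dist (y t0) (y s)" by (rule clampv_lip)
    finally show ?thesis using near[OF that] by (simp add: dist_commute)
  qed
  have t0I: "t0 \<in> I" using t0 \<delta> by (auto simp: I_def)
  define M where "M = Sup (e ` I)"
  have bdd: "bdd_above (e ` I)" using ebnd by (auto intro!: bdd_aboveI[where M="2*r"])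
  have eM: "e s \<le> M" if "s \<in> I" for s
    unfolding M_def using that bdd by (rule cSup_upper[OF imageI])
  have M0: "M \<ge> 0" using eM[OF t0I] by (simp add: e_def order_trans[OF zero_le_dist])
  have key: "\<bar>y t $ i - clampv yl yu (y t) $ i\<bar> \<le> L*M*\<delta>" if tI: "t \<in> I" for t i
  proof -
    have tt: "t0 \<le> t" "t \<le> \<tau>" "t \<le> t0 + \<delta>" using tI by (auto simp: I_def)
    have sI: "s \<in> I" if "s \<in> {t0..t}" for s using that tt t0 by (auto simp: I_def)
    consider "y t $ i < yl $ i" | "yu $ i < y t $ i" | "yl $ i \<le> y t $ i" "y t $ i \<le> yu $ i"
      by linarith
    then show ?thesis
    proof cases
      case 1
      have "yl $ i - y t $ i \<le> (L*M) * \<delta>"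
      proof (rule lower_piece[OF ycont Gint yeq _ tt])
        show "0 \<le> t0" using t0 by simp
        show "yl $ i \<le> y t0 $ i" using yt0 by (simp add: less_eq_vec_def)
        show "y t $ i < yl $ i" by fact
        show "L*M \<ge> 0" using L M0 by simp
        fix s assume s: "s \<in> {t0..t}" "y s $ i \<le> yl $ i"
        have "- (L * e s) \<le> G s $ i" unfolding e_def
          using low[OF _ near[OF sI[OF s(1)]] s(2)] sI[OF s(1)] by (auto simp: I_def)
        moreover have "L * e s \<le> L * M" using eM[OF sI[OF s(1)]] L by (rule mult_left_mono)
        ultimately show "- (L*M) \<le> G s $ i" by linarith
      qed
      moreover have "clampv yl yu (y t) $ i = yl $ i" using 1 lu by (intro clampv_low) auto
      ultimately show ?thesis using 1 by simp
    next
      case 2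
      have "y t $ i - yu $ i \<le> (L*M) * \<delta>"
      proof (rule upper_piece[OF ycont Gint yeq _ tt])
        show "0 \<le> t0" using t0 by simp
        show "y t0 $ i \<le> yu $ i" using yt0 by (simp add: less_eq_vec_def)
        show "yu $ i < y t $ i" by fact
        show "L*M \<ge> 0" using L M0 by simp
        fix s assume s: "s \<in> {t0..t}" "yu $ i \<le> y s $ i"
        have "G s $ i \<le> L * e s" unfolding e_def
          using up[OF _ near[OF sI[OF s(1)]] s(2)] sI[OF s(1)] by (auto simp: I_def)
        moreover have "L * e s \<le> L * M" using eM[OF sI[OF s(1)]] L by (rule mult_left_mono)
        ultimately show "G s $ i \<le> L*M" by linarith
      qed
      moreover have "clampv yl yu (y t) $ i = yu $ i" using 2 lu by (intro clampv_up) auto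
      ultimately show ?thesis using 2 by simp
    next
      case 3
      then have "clampv yl yu (y t) $ i = y t $ i" by (simp add: clampv_def)
      then show ?thesis using L M0 \<delta> by simp
    qed
  qed
  have eq: "e t \<le> M/4" if "t \<in> I" for t
  proof -
    have "e t \<le> n * (L*M*\<delta>)" unfolding e_def n_def
      by (rule clampv_dist_le) (rule key[OF that])
    also have "\<dots> = (n*L*\<delta>) * M" by simp
    also have "\<dots> \<le> (1/4) * M" using nL\<delta> M0 by (rule mult_right_mono)
    finally show ?thesis by simp
  qed
  have "M \<le> M/4" unfolding M_def using t0I eq
    by (intro cSup_least) (auto simp: M_def)
  then have M0': "M \<le> 0" by simp
  have "y t \<in> {yl..yu}" if "t \<in> I" for t
  proof -
    have "e t \<le> 0" using eq[OF that] M0' by simp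
    then have "e t = 0" unfolding e_def using zero_le_dist[of "y t" "clampv yl yu (y t)"] by linarith
    then have "y t = clampv yl yu (y t)" by (simp add: e_def)
    then show ?thesis using clampv_in[OF lu] by metis
  qed
  then show ?thesis using \<delta> by (auto simp: I_def)
qed

lemma invariance_core:
  fixes y G :: "real \<Rightarrow> real^'n" and yl yu :: "real^'n"
  assumes ycont: "continuous_on {0..\<tau>} y"
    and Gint: "\<And>t. t\<in>{0..\<tau>} \<Longrightarrow> G integrable_on {0..t}"
    and yeq: "\<And>t. t\<in>{0..\<tau>} \<Longrightarrow> y t = y 0 + integral {0..t} G"
    and y0: "y 0 \<in> {yl..yu}" and tau: "\<tau> \<ge> 0"
    and loc: "\<And>t0. t0 \<in> {0..\<tau>} \<Longrightarrow> y t0 \<in> {yl..yu} \<Longrightarrow> \<exists>r>0. \<exists>L\<ge>0.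
       (\<forall>s i. s\<in>{0..\<tau>} \<longrightarrow> dist (y s) (y t0) < r \<longrightarrow> y s $ i \<le> yl $ i \<longrightarrow>
                 - (L * dist (y s) (clampv yl yu (y s))) \<le> G s $ i) \<and>
       (\<forall>s i. s\<in>{0..\<tau>} \<longrightarrow> dist (y s) (y t0) < r \<longrightarrow> yu $ i \<le> y s $ i \<longrightarrow>
                 G s $ i \<le> L * dist (y s) (clampv yl yu (y s)))"
  shows "\<forall>t\<in>{0..\<tau>}. y t \<in> {yl..yu}"
proof (rule ccontr)
  assume neg: "\<not> (\<forall>t\<in>{0..\<tau>}. y t \<in> {yl..yu})"
  define A where "A = {t\<in>{0..\<tau>}. y t \<notin> {yl..yu}}"
  have Ane: "A \<noteq> {}" using neg by (auto simp: A_def)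
  have lu: "yl \<le> yu" using y0 by auto
  have bA: "bdd_below A" by (rule bdd_belowI[of _ 0]) (auto simp: A_def)
  define ts where "ts = Inf A"
  have ts0: "0 \<le> ts" unfolding ts_def using Ane by (intro cInf_greatest) (auto simp: A_def)
  have tsA: "ts \<le> a" if "a \<in> A" for a unfolding ts_def using that bA by (rule cInf_lower)
  obtain a0 where a0: "a0 \<in> A" using Ane by auto
  have tstau: "ts \<le> \<tau>" using tsA[OF a0] a0 by (auto simp: A_def)
  have before: "y s \<in> {yl..yu}" if "s \<in> {0..<ts}" for s
  proof (rule ccontr)
    assume "y s \<notin> {yl..yu}"
    then have "s \<in> A" using that tstau by (auto simp: A_def)
    then show False using tsA that by force
  qed
  have yts: "y ts \<in> {yl..yu}"
  proof (cases "ts = 0")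
    case True then show ?thesis using y0 by simp
  next
    case False
    then have tspos: "0 < ts" using ts0 by simp
    define B where "B = {0..\<tau>} \<inter> y -` {yl..yu}"
    have cB: "closed B" unfolding B_def
      by (rule continuous_closed_preimage[OF ycont]) (auto simp: interval_cbox_cart)
    have "{0..<ts} \<subseteq> B" using before tstau by (auto simp: B_def)
    then have "closure {0..<ts} \<subseteq> B" using cB closure_minimal by blast
    then have "{0..ts} \<subseteq> B" using tspos by simp
    then show ?thesis using ts0 by (auto simp: B_def)
  qed
  have tsI: "ts \<in> {0..\<tau>}" using ts0 tstau by simp
  obtain r L where rL: "r > 0" "L \<ge> 0"
    "\<And>s i. s\<in>{0..\<tau>} \<Longrightarrow> dist (y s) (y ts) < r \<Longrightarrow> y s $ i \<le> yl $ i \<Longrightarrow>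
                 - (L * dist (y s) (clampv yl yu (y s))) \<le> G s $ i"
    "\<And>s i. s\<in>{0..\<tau>} \<Longrightarrow> dist (y s) (y ts) < r \<Longrightarrow> yu $ i \<le> y s $ i \<Longrightarrow>
                 G s $ i \<le> L * dist (y s) (clampv yl yu (y s))"
    using loc[OF tsI yts] by blast
  obtain \<delta> where \<delta>: "\<delta> > 0" "\<And>t. t\<in>{0..\<tau>} \<Longrightarrow> ts \<le> t \<Longrightarrow> t \<le> ts + \<delta> \<Longrightarrow> y t \<in> {yl..yu}"
    using local_step[OF ycont Gint yeq lu tsI yts rL] by blast
  have "Inf A < ts + \<delta>" using \<delta> by (simp add: ts_def)
  then obtain a where a: "a \<in> A" "a < ts + \<delta>" using cInf_less_iff[OF Ane bA] by blast
  then have "y a \<in> {yl..yu}" using \<delta>(2)[of a] tsA[OF a(1)] by (auto simp: A_def)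
  then show False using a by (auto simp: A_def)
qed

lemma incl_lower:
  fixes g :: "real^'n \<Rightarrow> real^'m \<Rightarrow> real^'n"
  assumes incl: "localized_inclusion S g Gl Gu" and box: "{yl0..yu0} \<subseteq> S"
    and se: "se_nonneg (embed_lower Gl yl0 yu0 wl wu) (embed_upper Gu yl0 yu0 wl wu)"
    and lu: "yl0 \<le> yu0" and z: "z \<in> {yl0..yu0}" and zi: "z $ i = yl0 $ i"
    and w: "w \<in> {wl..wu}"
  shows "0 \<le> g z w $ i"
proof -
  have sub: "{yl0..vec_repl yu0 i yl0} \<subseteq> S"
  proof -
    have "vec_repl yu0 i yl0 \<le> yu0" "yl0 \<le> vec_repl yu0 i yl0"
      using lu by (auto simp: less_eq_vec_def vec_repl_def)
    then show ?thesis using box by (meson atLeastAtMost_iff order_trans subset_iff)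
  qed
  have zin: "z \<in> {yl0..vec_repl yu0 i yl0}"
    using z zi by (auto simp: less_eq_vec_def vec_repl_def)
  have "Gl yl0 (vec_repl yu0 i yl0) wl wu \<le> g z w"
    using incl sub zin w unfolding localized_inclusion_def by blast
  then have "Gl yl0 (vec_repl yu0 i yl0) wl wu $ i \<le> g z w $ i" by (simp add: less_eq_vec_def)
  moreover have "0 \<le> Gl yl0 (vec_repl yu0 i yl0) wl wu $ i"
    using se unfolding se_nonneg_def embed_lower_def by (simp add: less_eq_vec_def)
  ultimately show ?thesis by linarith
qed

lemma incl_upper:
  fixes g :: "real^'n \<Rightarrow> real^'m \<Rightarrow> real^'n"
  assumes incl: "localized_inclusion S g Gl Gu" and box: "{yl0..yu0} \<subseteq> S"
    and se: "se_nonneg (embed_lower Gl yl0 yu0 wl wu) (embed_upper Gu yl0 yu0 wl wu)"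
    and lu: "yl0 \<le> yu0" and z: "z \<in> {yl0..yu0}" and zi: "z $ i = yu0 $ i"
    and w: "w \<in> {wl..wu}"
  shows "g z w $ i \<le> 0"
proof -
  have sub: "{vec_repl yl0 i yu0..yu0} \<subseteq> S"
  proof -
    have "vec_repl yl0 i yu0 \<le> yu0" "yl0 \<le> vec_repl yl0 i yu0"
      using lu by (auto simp: less_eq_vec_def vec_repl_def)
    then show ?thesis using box by (meson atLeastAtMost_iff order_trans subset_iff)
  qed
  have zin: "z \<in> {vec_repl yl0 i yu0..yu0}"
    using z zi by (auto simp: less_eq_vec_def vec_repl_def)
  have "g z w \<le> Gu (vec_repl yl0 i yu0) yu0 wl wu"
    using incl sub zin w unfolding localized_inclusion_def by blast
  then have "g z w $ i \<le> Gu (vec_repl yl0 i yu0) yu0 wl wu $ i" by (simp add: less_eq_vec_def)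
  moreover have "Gu (vec_repl yl0 i yu0) yu0 wl wu $ i \<le> 0"
    using se unfolding se_nonneg_def embed_upper_def by (simp add: less_eq_vec_def)
  ultimately show ?thesis by linarith
qed

theorem theorem2:
  fixes f :: "real^'n \<Rightarrow> 'u \<Rightarrow> real^'m \<Rightarrow> real^'n"
    and N :: "real^'n \<Rightarrow> 'u"
    and T :: "real^'n^'n"
    and S :: "(real^'n) set"
    and Gl Gu :: "real^'n \<Rightarrow> real^'n \<Rightarrow> real^'m \<Rightarrow> real^'m \<Rightarrow> real^'n"
    and wl wu :: "real^'m"
    and yl0 yu0 :: "real^'n"
  assumes cont: "continuous_on UNIV (\<lambda>(x, w). f x (N x) w)"
    and lip: "local_lipschitz UNIV UNIV (\<lambda>w x. f x (N x) w)"
    and inv: "invertible T"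
    and incl: "localized_inclusion S
                 (\<lambda>y w. T *v f (matrix_inv T *v y) (N (matrix_inv T *v y)) w) Gl Gu"
    and box: "{yl0..yu0} \<subseteq> S"
    and se: "se_nonneg (embed_lower Gl yl0 yu0 wl wu) (embed_upper Gu yl0 yu0 wl wu)"
  shows "robustly_forward_invariant (\<lambda>x w. f x (N x) w) {wl..wu}
           ((\<lambda>y. matrix_inv T *v y) ` {yl0..yu0})"
  unfolding robustly_forward_invariant_def
proof (intro allI impI)
  fix w :: "real \<Rightarrow> real^'m" and x :: "real \<Rightarrow> real^'n" and \<tau> :: real
  assume H: "piecewise_continuous_nonneg w \<and> (\<forall>t\<ge>0. w t \<in> {wl..wu}) \<and> 0 \<le> \<tau> \<and>
        is_solution (\<lambda>x w. f x (N x) w) w \<tau> x \<and> x 0 \<in> (\<lambda>y. matrix_inv T *v y) ` {yl0..yu0}"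
  define Ti where "Ti = matrix_inv T"
  have TTi: "T ** Ti = mat 1 \<and> Ti ** T = mat 1"
    using inv unfolding invertible_def matrix_inv_def Ti_def by (rule someI_ex)
  have TiTv: "Ti *v (T *v v) = v" for v
    using TTi by (simp add: matrix_vector_mul_assoc)
  have TTiv: "T *v (Ti *v v) = v" for v
    using TTi by (simp add: matrix_vector_mul_assoc)
  define F where "F = (\<lambda>x w. f x (N x) w)"
  define g where "g = (\<lambda>y w. T *v F (Ti *v y) w)"
  have wW: "\<And>t. t \<ge> 0 \<Longrightarrow> w t \<in> {wl..wu}" and tau: "0 \<le> \<tau>"
    and sol: "is_solution F w \<tau> x" and x0: "x 0 \<in> (\<lambda>y. Ti *v y) ` {yl0..yu0}"
    using H by (auto simp: F_def Ti_def)
  have xc: "continuous_on {0..\<tau>} x"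
    and Fint: "\<And>t. t\<in>{0..\<tau>} \<Longrightarrow> (\<lambda>s. F (x s) (w s)) integrable_on {0..t}"
    and xeq: "\<And>t. t\<in>{0..\<tau>} \<Longrightarrow> x t = x 0 + integral {0..t} (\<lambda>s. F (x s) (w s))"
    using sol unfolding is_solution_def by blast+
  define y where "y = (\<lambda>t. T *v x t)"
  define G where "G = (\<lambda>s. T *v F (x s) (w s))"
  have yc: "continuous_on {0..\<tau>} y" unfolding y_def
    by (rule continuous_on_compose2[OF matrix_vector_mult_linear_continuous_on xc]) auto
  have Gint: "G integrable_on {0..t}" if "t\<in>{0..\<tau>}" for t
    using integrable_linear[OF Fint[OF that] matrix_vector_mul_bounded_linear[of T]]
    by (simp add: G_def o_def)
  have yeq: "y t = y 0 + integral {0..t} G" if "t\<in>{0..\<tau>}" for t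
  proof -
    have "y t = T *v x 0 + T *v integral {0..t} (\<lambda>s. F (x s) (w s))"
      unfolding y_def using xeq[OF that] by (simp add: matrix_vector_right_distrib)
    also have "T *v integral {0..t} (\<lambda>s. F (x s) (w s)) = integral {0..t} G"
      using integral_linear[OF Fint[OF that] matrix_vector_mul_bounded_linear[of T]]
      by (simp add: G_def o_def)
    finally show ?thesis by (simp add: y_def)
  qed
  obtain y00 where y00: "y00 \<in> {yl0..yu0}" "x 0 = Ti *v y00" using x0 by auto
  have lu: "yl0 \<le> yu0" using y00 by auto
  have y0: "y 0 \<in> {yl0..yu0}" using y00 by (simp add: y_def TTiv)
  have Gg: "G s = g (y s) (w s)" for s by (simp add: G_def g_def y_def TiTv)
  have inclg: "localized_inclusion S g Gl Gu" using incl by (simp add: g_def F_def Ti_def)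
  obtain K1 where K1: "K1 > 0" "\<And>v. norm (Ti *v v) \<le> norm v * K1"
    using bounded_linear.pos_bounded[OF matrix_vector_mul_bounded_linear[of Ti]] by blast
  obtain K2 where K2: "K2 > 0" "\<And>v. norm (T *v v) \<le> norm v * K2"
    using bounded_linear.pos_bounded[OF matrix_vector_mul_bounded_linear[of T]] by blast
  have W0: "w 0 \<in> {wl..wu}" using wW by simp
  have all: "\<forall>t\<in>{0..\<tau>}. y t \<in> {yl0..yu0}"
  proof (rule invariance_core[OF yc Gint yeq y0 tau])
    fix t0 assume t0: "t0 \<in> {0..\<tau>}" and yt0: "y t0 \<in> {yl0..yu0}"
    define xc0 where "xc0 = Ti *v y t0"
    have lip': "local_lipschitz {wl..wu} (cball xc0 1) (\<lambda>w x. F x w)"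
      using local_lipschitz_subset[OF lip, of "{wl..wu}" "cball xc0 1"] by (simp add: F_def)
    have contw: "continuous_on {wl..wu} (\<lambda>w. F z w)" for z
    proof -
      have "continuous_on {wl..wu} ((\<lambda>(x, w). f x (N x) w) \<circ> (\<lambda>w. (z, w)))"
        by (rule continuous_on_compose[OF _ continuous_on_subset[OF cont]]) (auto intro!: continuous_intros)
      then show ?thesis by (simp add: F_def o_def)
    qed
    obtain L0 where L0: "\<And>v. v \<in> {wl..wu} \<Longrightarrow> L0-lipschitz_on (cball xc0 1) (\<lambda>x. F x v)"
      using local_lipschitz_compact_implies_lipschitz[OF lip' compact_cball _ contw]
      by (metis compact_cbox interval_cbox_cart)
    have L00: "L0 \<ge> 0" using L0[OF W0] by (rule lipschitz_on_nonneg)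
    define r where "r = 1 / K1"
    define L where "L = K2 * L0 * K1"
    have diffb: "\<bar>G s $ i - g (clampv yl0 yu0 (y s)) (w s) $ i\<bar> \<le> L * dist (y s) (clampv yl0 yu0 (y s))"
      if s: "s \<in> {0..\<tau>}" "dist (y s) (y t0) < r" for s i
    proof -
      define z where "z = clampv yl0 yu0 (y s)"
      have dz: "dist z (y t0) < r"
        using clampv_lip[of yl0 yu0 "y s" "y t0"] clampv_id[OF yt0] s(2) by (simp add: z_def)
      have inX: "Ti *v v \<in> cball xc0 1" if "dist v (y t0) < r" for v
      proof -
        have "norm (Ti *v v - xc0) = norm (Ti *v (v - y t0))"
          by (simp add: xc0_def matrix_vector_right_distrib[symmetric] algebra_simps)
        also have "\<dots> \<le> norm (v - y t0) * K1" by (rule K1(2))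
        also have "\<dots> \<le> r * K1" using that K1 by (simp add: dist_norm)
        also have "\<dots> = 1" using K1 by (simp add: r_def)
        finally show ?thesis by (simp add: dist_norm norm_minus_commute)
      qed
      have ws: "w s \<in> {wl..wu}" using wW s by auto
      have "\<bar>G s $ i - g z (w s) $ i\<bar> \<le> norm (G s - g z (w s))"
        using component_le_norm_cart[of "G s - g z (w s)" i] by simp
      also have "G s - g z (w s) = T *v (F (Ti *v y s) (w s) - F (Ti *v z) (w s))"
        by (simp add: Gg g_def matrix_vector_right_distrib[symmetric] algebra_simps)
      also have "norm \<dots> \<le> norm (F (Ti *v y s) (w s) - F (Ti *v z) (w s)) * K2" by (rule K2(2))
      also have "norm (F (Ti *v y s) (w s) - F (Ti *v z) (w s)) \<le> L0 * norm (Ti *v y s - Ti *v z)"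
        by (rule lipschitz_on_normD[OF L0[OF ws] inX inX]) (use s(2) dz in auto)
      also have "Ti *v y s - Ti *v z = Ti *v (y s - z)"
        by (simp add: matrix_vector_right_distrib[symmetric] algebra_simps)
      also have "norm \<dots> \<le> norm (y s - z) * K1" by (rule K1(2))
      finally have "\<bar>G s $ i - g z (w s) $ i\<bar> \<le> L0 * (norm (y s - z) * K1) * K2"
        using K2 L00 by (simp add: mult_right_mono mult_left_mono)
      then show ?thesis by (simp add: L_def dist_norm z_def algebra_simps)
    qed
    show "\<exists>r>0. \<exists>L\<ge>0.
       (\<forall>s i. s\<in>{0..\<tau>} \<longrightarrow> dist (y s) (y t0) < r \<longrightarrow> y s $ i \<le> yl0 $ i \<longrightarrow>
                 - (L * dist (y s) (clampv yl0 yu0 (y s))) \<le> G s $ i) \<and>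
       (\<forall>s i. s\<in>{0..\<tau>} \<longrightarrow> dist (y s) (y t0) < r \<longrightarrow> yu0 $ i \<le> y s $ i \<longrightarrow>
                 G s $ i \<le> L * dist (y s) (clampv yl0 yu0 (y s)))"
    proof (intro exI conjI allI impI)
      show "r > 0" using K1 by (simp add: r_def)
      show "L \<ge> 0" using K1 K2 L00 by (simp add: L_def)
      fix s i assume s: "s \<in> {0..\<tau>}" "dist (y s) (y t0) < r"
      have ws: "w s \<in> {wl..wu}" using wW s by auto
      {
        assume "y s $ i \<le> yl0 $ i"
        then have "0 \<le> g (clampv yl0 yu0 (y s)) (w s) $ i"
          by (intro incl_lower[OF inclg box se lu clampv_in[OF lu] _ ws] clampv_low lu)
        then show "- (L * dist (y s) (clampv yl0 yu0 (y s))) \<le> G s $ i"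
          using diffb[OF s, of i] by linarith
      next
        assume "yu0 $ i \<le> y s $ i"
        then have "g (clampv yl0 yu0 (y s)) (w s) $ i \<le> 0"
          by (intro incl_upper[OF inclg box se lu clampv_in[OF lu] _ ws] clampv_up lu)
        then show "G s $ i \<le> L * dist (y s) (clampv yl0 yu0 (y s))"
          using diffb[OF s, of i] by linarith
      }
    qed
  qed
  show "\<forall>t\<in>{0..\<tau>}. x t \<in> (\<lambda>y. matrix_inv T *v y) ` {yl0..yu0}"
  proof
    fix t assume "t \<in> {0..\<tau>}"
    then have "y t \<in> {yl0..yu0}" using all by auto
    moreover have "x t = Ti *v y t" by (simp add: y_def TiTv)
    ultimately show "x t \<in> (\<lambda>y. matrix_inv T *v y) ` {yl0..yu0}" by (auto simp: Ti_def)
  qed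
qed

end
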